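(* Let $d\ge2$ and suppose that either $d=2$ and $p\in(2,6)$, or $d\ge3$ and $p\in(2,2^* )$. Then for every $\theta\in(\vartheta(p,3),1)$, $\Lambda_2(\theta,p,d)>\frac{(d-1)\alpha}{4(p-2)}\cdot\frac{\beta\theta(6-p)-\alpha\big(1-\theta+\beta\theta\,\mathsf N^{-1/\beta}\big)}{\beta\theta(6-p)\mathsf N^{1/\beta}-\alpha(\beta\theta+1-\theta)}$, where $\alpha=2p\theta-3(p-2)$, $\beta=1-\frac{p-2}{2p\theta}$ and $\mathsf N=\mathsf N(\theta,p)$.
   Context: $2^*=2d/(d-2)$ for $d\ge3$; $\vartheta(p,3)=\frac{3(p-2)}{2p}$. Let $\mathsf K^*_{\rm CKN}(\theta,p,\Lambda)=\big[\tfrac{2p\theta+2-p}{(p-2)^2}\big]^{\frac{p-2}{2p}}\big[\tfrac{2p\theta}{2p\theta+2-p}\big]^{\theta}\big[\tfrac{p+2}{4}\big]^{\frac{6-p}{2p}}\Big[\tfrac{\sqrt\pi\,\Gamma(\frac2{p-2})}{\Gamma(\frac2{p-2}+\frac12)}\Big]^{\frac{p-2}{p}}\Lambda^{\theta-\frac{p-2}{2p}}$, $q^*(\theta,p)=\frac{2p\theta}{2-p(1-\theta)}$, $\mathsf N(\theta,p)=\mathsf K^*_{\rm CKN}(\theta,p,1)^{1/\theta}/\mathsf K^*_{\rm CKN}(1,q^*(\theta,p),1)$. $\mathsf x^*(\theta,p)$ is the unique root in $(\mathsf N^{1/\beta},\infty)$ of $\theta(6-p)(x^\beta-\mathsf N)x-(2p\theta-3(p-2))\big(\theta(x^\beta-\mathsf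 N)+(1-\theta)(x-1)\mathsf N\big)=0$, and $\Lambda_2(\theta,p,d)=\frac14(d-1)\frac{2p\theta-3(p-2)}{(p-2)\mathsf x^*(\theta,p)}$. *)

theory Defs
  imports "HOL-Analysis.Analysis"
begin

definition crit_exp :: "nat \<Rightarrow> real" where
  "crit_exp d = 2 * real d / (real d - 2)"

definition vartheta :: "real \<Rightarrow> real \<Rightarrow> real" where
  "vartheta p n = n * (p - 2) / (2 * p)"

definition K_CKN :: "real \<Rightarrow> real \<Rightarrow> real \<Rightarrow> real" where
  "K_CKN \<theta> p \<Lambda> =
     ((2*p*\<theta> + 2 - p) / (p - 2)^2) powr ((p - 2) / (2*p))
   * ((2*p*\<theta>) / (2*p*\<theta> + 2 - p)) powr \<theta>
   * ((p + 2) / 4) powr ((6 - p) / (2*p))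
   * (sqrt pi * Gamma (2 / (p - 2)) / Gamma (2 / (p - 2) + 1/2)) powr ((p - 2) / p)
   * \<Lambda> powr (\<theta> - (p - 2) / (2*p))"

definition q_star :: "real \<Rightarrow> real \<Rightarrow> real" where
  "q_star \<theta> p = 2*p*\<theta> / (2 - p*(1 - \<theta>))"

definition N_ratio :: "real \<Rightarrow> real \<Rightarrow> real" where
  "N_ratio \<theta> p = K_CKN \<theta> p 1 powr (1/\<theta>) / K_CKN 1 (q_star \<theta> p) 1"

definition beta_exp :: "real \<Rightarrow> real \<Rightarrow> real" where
  "beta_exp \<theta> p = 1 - (p - 2) / (2*p*\<theta>)"

definition x_eq :: "real \<Rightarrow> real \<Rightarrow> real \<Rightarrow> real" where
  "x_eq \<theta> p x =
     (let \<beta> = beta_exp \<theta> p; N = N_ratio \<theta> p in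
      \<theta>*(6 - p)*(x powr \<beta> - N)*x
      - (2*p*\<theta> - 3*(p - 2)) * (\<theta>*(x powr \<beta> - N) + (1 - \<theta>)*(x - 1)*N))"

definition x_star :: "real \<Rightarrow> real \<Rightarrow> real" where
  "x_star \<theta> p =
     (THE x. N_ratio \<theta> p powr (1 / beta_exp \<theta> p) < x \<and> x_eq \<theta> p x = 0)"

definition Lambda2 :: "real \<Rightarrow> real \<Rightarrow> nat \<Rightarrow> real" where
  "Lambda2 \<theta> p d = (real d - 1) / 4 * (2*p*\<theta> - 3*(p - 2)) / ((p - 2) * x_star \<theta> p)"

end

theory Submission imports Defs begin

lemma trigamma_lt:
  fixes y :: real assumes y: "y > 0"
  shows "Polygamma 1 (y+1) < 1/y"
proof -
  have s1: "(\<lambda>k. inverse ((y + 1 + of_nat k)^2)) sums Polygamma 1 (y+1)"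
    using Polygamma_LIMSEQ[of "y+1" 1] y by (simp add: power2_eq_square)
  have s2: "(\<lambda>k. inverse (y + of_nat k) - inverse (y + of_nat (Suc k))) sums (inverse (y + of_nat 0) - 0)"
    by (intro telescope_sums'[OF filterlim_compose[OF tendsto_inverse_0]]
              tendsto_add_filterlim_at_infinity[OF tendsto_const] tendsto_of_nat)
  have s3: "(\<lambda>k. (inverse (y + of_nat k) - inverse (y + of_nat (Suc k))) - inverse ((y + 1 + of_nat k)^2))
     sums (inverse y - Polygamma 1 (y+1))"
    using sums_diff[OF s2 s1] by simp
  have pos: "0 < (inverse (y + of_nat k) - inverse (y + of_nat (Suc k))) - inverse ((y + 1 + of_nat k)^2)" for k
  proof -
    have h: "y + real k > 0" using y by simp
    have "inverse (y + of_nat k) - inverse (y + of_nat (Suc k)) = 1 / ((y+k)*(y+k+1))"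
      using h by (simp add: field_simps)
    moreover have "inverse ((y + 1 + of_nat k)^2) = 1/((y+k+1)*(y+k+1))"
      by (simp add: power2_eq_square field_simps)
    moreover have "1/((y+k+1)*(y+k+1)) < 1 / ((y+k)*(y+k+1))"
      using h by (intro divide_strict_left_mono mult_strict_right_mono) auto
    ultimately show ?thesis by simp
  qed
  have "0 < inverse y - Polygamma 1 (y+1)"
    using suminf_pos[OF sums_summable[OF s3] pos] sums_unique[OF s3] by simp
  thus ?thesis by (simp add: inverse_eq_divide)
qed

lemma g_dec:
  fixes x z :: real assumes "0 < x" "x < z"
  shows "Digamma (z+1) - ln z < Digamma (x+1) - ln x"
proof -
  have "(\<lambda>t. Digamma (t+1) - ln t) x > (\<lambda>t. Digamma (t+1) - ln t) z"
  proof (rule DERIV_neg_imp_decreasing[OF assms(2)])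
    fix t assume t: "x \<le> t" "t \<le> z"
    hence tp: "t > 0" using assms by simp
    have nz: "t + 1 \<notin> \<int>\<^sub>\<le>\<^sub>0" using tp by (auto elim!: nonpos_Ints_cases)
    have "((\<lambda>t. Digamma (t+1) - ln t) has_field_derivative (Polygamma 1 (t+1) * 1 - 1/t)) (at t)"
      using tp nz by (auto intro!: derivative_eq_intros DERIV_chain2[OF has_field_derivative_Polygamma])
    moreover have "Polygamma 1 (t+1) * 1 - 1/t < 0" using trigamma_lt[OF tp] by simp
    ultimately show "\<exists>y. ((\<lambda>t. Digamma (t+1) - ln t) has_real_derivative y) (at t) \<and> y < 0" by blast
  qed
  thus ?thesis by simp
qed

lemma w_bound:
  fixes x :: real assumes x: "x > 0"
  shows "Digamma (x + 1/2) - Digamma x < ln (x + 1/2) - ln x + 1/(x*(2*x+1))"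
proof -
  have "Digamma (x + 1/2 + 1) - ln (x+1/2) < Digamma (x+1) - ln x"
    using g_dec[of x "x+1/2"] x by simp
  moreover have "Digamma (x + 1/2 + 1) = Digamma (x+1/2) + 1/(x+1/2)"
    using Digamma_plus1[of "x+1/2"] x by simp
  moreover have "Digamma (x + 1) = Digamma x + 1/x"
    using Digamma_plus1[of "x"] x by simp
  moreover have "1/x - 1/(x+1/2) = 1/(x*(2*x+1))" using x by (simp add: field_simps)
  ultimately show ?thesis by linarith
qed

definition mfun :: "real \<Rightarrow> real" where
  "mfun x = ln x + (2*x-1)*(ln (x+1/2) - ln x) + 2 * ln_Gamma x - 2 * ln_Gamma (x+1/2)"

lemma mfun_mono:
  fixes a c :: real assumes "0 < a" "a < c"
  shows "mfun a < mfun c"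
  unfolding mfun_def
proof (rule DERIV_pos_imp_increasing[OF assms(2)])
  fix t assume t: "a \<le> t" "t \<le> c"
  hence tp: "t > 0" using assms by simp
  let ?d = "((inverse t + (2 * (ln (t+1/2) - ln t) + (inverse (t+1/2) - inverse t) * (2*t-1))) + 2 * Digamma t) - 2 * Digamma (t+1/2)"
  have "((\<lambda>x. ln x + (2*x-1)*(ln (x+1/2) - ln x) + 2 * ln_Gamma x - 2 * ln_Gamma (x+1/2)) has_real_derivative ?d) (at t)"
    using tp 
  proof -
    have h1: "(ln has_real_derivative inverse t) (at t)" using tp by (rule DERIV_ln)
    have h2: "((\<lambda>x. ln (x+1/2)) has_real_derivative inverse (t+1/2)) (at t)"
      using tp by (auto intro!: derivative_eq_intros simp: inverse_eq_divide)
    have h3: "((\<lambda>x. 2*x-1) has_real_derivative 2) (at t)" by (auto intro!: derivative_eq_intros)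
    have h4: "(ln_Gamma has_real_derivative Digamma t) (at t)" using tp by (rule has_field_derivative_ln_Gamma_real)
    have h5: "((\<lambda>x. ln_Gamma (x+1/2)) has_real_derivative Digamma (t+1/2)) (at t)"
      using tp by (auto intro!: derivative_eq_intros)
    show ?thesis
      by (rule DERIV_diff[OF DERIV_add[OF DERIV_add[OF h1 DERIV_mult[OF h3 DERIV_diff[OF h2 h1]]] DERIV_cmult[OF h4]] DERIV_cmult[OF h5]])
  qed
  moreover have "?d > 0"
  proof -
    have h1: "1/(t+1/2) = 2/(2*t+1)" using tp by (simp add: field_simps)
    have e: "1/t + (2*t-1)*(1/(t+1/2) - 1/t) = 2/(t*(2*t+1))" unfolding h1 using tp
      by (simp add: divide_simps)
    show ?thesis using w_bound[OF tp] e by (simp add: algebra_simps inverse_eq_divide)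
  qed
  ultimately show "\<exists>y. ((\<lambda>x. ln x + (2*x-1)*(ln (x+1/2) - ln x) + 2 * ln_Gamma x - 2 * ln_Gamma (x+1/2)) has_real_derivative y) (at t) \<and> y > 0" by blast
qed

lemma lnK:
  fixes \<theta> p :: real
  assumes p: "p > 2" and th: "\<theta> > 0" and A: "2*p*\<theta> + 2 - p > 0"
  shows "K_CKN \<theta> p 1 > 0 \<and> ln (K_CKN \<theta> p 1) =
     (p-2)/(2*p) * ln ((2*p*\<theta> + 2 - p) / (p - 2)^2) + \<theta> * ln ((2*p*\<theta>) / (2*p*\<theta> + 2 - p))
     + (6-p)/(2*p) * ln ((p+2)/4)
     + (p-2)/p * (ln (sqrt pi) + ln_Gamma (2/(p-2)) - ln_Gamma (2/(p-2) + 1/2))"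
proof -
  define b1 where "b1 = (2*p*\<theta> + 2 - p) / (p - 2)^2"
  define b2 where "b2 = (2*p*\<theta>) / (2*p*\<theta> + 2 - p)"
  define b3 where "b3 = (p+2)/(4::real)"
  define b4 where "b4 = sqrt pi * Gamma (2 / (p - 2)) / Gamma (2 / (p - 2) + 1/2)"
  have b1: "b1 > 0" unfolding b1_def using A p by simp
  have b2: "b2 > 0" unfolding b2_def using A p th by simp
  have b3: "b3 > 0" unfolding b3_def using p by simp
  have g1: "Gamma (2 / (p - 2)) > 0" "Gamma (2 / (p - 2) + 1/2) > 0"
    using p by (auto intro!: Gamma_real_pos add_pos_pos)
  have b4: "b4 > 0" unfolding b4_def using g1 by simp
  have K: "K_CKN \<theta> p 1 = b1 powr ((p - 2) / (2*p)) * b2 powr \<theta> * b3 powr ((6 - p) / (2*p)) * b4 powr ((p - 2) / p)"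
    unfolding K_CKN_def b1_def b2_def b3_def b4_def by simp
  have Kpos: "K_CKN \<theta> p 1 > 0" unfolding K using b1 b2 b3 b4 by simp
  have "ln (K_CKN \<theta> p 1) = (p-2)/(2*p) * ln b1 + \<theta> * ln b2 + (6-p)/(2*p) * ln b3 + (p-2)/p * ln b4"
    unfolding K using b1 b2 b3 b4 by (simp add: ln_mult ln_powr)
  moreover have "ln b4 = ln (sqrt pi) + ln_Gamma (2/(p-2)) - ln_Gamma (2/(p-2) + 1/2)"
  proof -
    have c0: "2/(p-2) > 0" "2/(p-2) + 1/2 > 0" using p by (auto intro!: add_pos_pos)
    have "ln b4 = ln (sqrt pi) + ln (Gamma (2/(p-2))) - ln (Gamma (2/(p-2) + 1/2))"
      unfolding b4_def using g1 by (simp add: ln_mult ln_div)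
    thus ?thesis using ln_Gamma_real_pos[OF c0(1)] ln_Gamma_real_pos[OF c0(2)] by simp
  qed
  ultimately show ?thesis using Kpos unfolding b1_def b2_def b3_def by simp
qed

lemma frac_ids: assumes "(D::real) > 0" "X > 0"
  shows "(2*X/D-2)/(2*(2*X/D)) = (X-D)/(2*X)"
    "(6-2*X/D)/(2*(2*X/D)) = (3*D - X)/(2*X)"
    "(2*X/D-2)/(2*X/D) = (X-D)/X"
  using assms by (simp_all add: field_simps)

lemma alg0: fixes t it ka kb kc K c1 a1 LA Lm L2 Lp Lt Lq Lpi Gc Gc2 LD Ga Ga2 :: real
  assumes "it*ka = K" "it*kb = K*c1" "it*kc = 2*K" "it*t = 1"
  shows "it*(ka*(LA-2*Lm) + t*(L2+Lp+Lt-LA) + kb*(Lq-2*L2) + kc*(Lpi+Gc-Gc2)) - (K*(LA+LD-L2-2*Lm) + (L2+Lp+Lt-LA) + K*a1*(LA-LD-L2) + 2*K*(Lpi+Ga-Ga2))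
   = K*((L2-Lm) + c1*(Lq-2*L2) + 2*Gc - 2*Gc2 - (LD-Lm) - a1*(LA-L2-LD) - 2*Ga + 2*Ga2)"
proof -
  have "it*(ka*(LA-2*Lm) + t*(L2+Lp+Lt-LA) + kb*(Lq-2*L2) + kc*(Lpi+Gc-Gc2))
      = (it*ka)*(LA-2*Lm) + (it*t)*(L2+Lp+Lt-LA) + (it*kb)*(Lq-2*L2) + (it*kc)*(Lpi+Gc-Gc2)"
    by (simp add: algebra_simps)
  also have "\<dots> = K*(LA-2*Lm) + (L2+Lp+Lt-LA) + (K*c1)*(Lq-2*L2) + (2*K)*(Lpi+Gc-Gc2)"
    using assms by simp
  finally show ?thesis by (simp add: algebra_simps)
qed

lemma N_gt_1:
  fixes \<theta> p :: real
  assumes p: "p > 2" and th0: "vartheta p 3 < \<theta>" and th1: "\<theta> < 1"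
  shows "N_ratio \<theta> p > 1"
proof -
  define D where "D = 2 - p + p*\<theta>"
  define A where "A = 2*p*\<theta> + 2 - p"
  define q where "q = q_star \<theta> p"
  have th0': "3*(p-2) < 2*p*\<theta>" using th0 p unfolding vartheta_def by (simp add: field_simps)
  have "0 < 2*p*\<theta>" using th0' p by (simp add: algebra_simps)
  hence thp: "\<theta> > 0" using p by (simp add: zero_less_mult_iff)
  have pt: "2*p*\<theta> = 2*(p*\<theta>)" by simp
  have Dp: "D > 0" unfolding D_def using th0' p by (simp add: algebra_simps)
  have Ap: "A > 0" unfolding A_def using th0' p by (simp add: algebra_simps)
  have D2: "D < 2" unfolding D_def using th1 p by (simp add: algebra_simps)
  have qdef: "q = 2*p*\<theta>/D" unfolding q_def q_star_def D_def by (simp add: algebra_simps)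
  have q2: "q - 2 = 2*(p-2)/D" unfolding qdef using Dp by (simp add: field_simps D_def)
  have qp2: "q + 2 = 2*A/D" unfolding qdef using Dp by (simp add: field_simps D_def A_def)
  have "2*(p-2)/D > 0" using Dp p by simp
  hence qgt: "q > 2" using q2 by linarith
  have qA: "2*q*1 + 2 - q > 0" using qgt by simp
  obtain K1 where K1: "K_CKN \<theta> p 1 > 0" "ln (K_CKN \<theta> p 1) =
     (p-2)/(2*p) * ln ((2*p*\<theta> + 2 - p) / (p - 2)^2) + \<theta> * ln ((2*p*\<theta>) / (2*p*\<theta> + 2 - p))
     + (6-p)/(2*p) * ln ((p+2)/4)
     + (p-2)/p * (ln (sqrt pi) + ln_Gamma (2/(p-2)) - ln_Gamma (2/(p-2) + 1/2))"
    using lnK[OF p thp] Ap unfolding A_def by auto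
  obtain K2 where K2: "K_CKN 1 q 1 > 0" "ln (K_CKN 1 q 1) =
     (q-2)/(2*q) * ln ((2*q*1 + 2 - q) / (q - 2)^2) + 1 * ln ((2*q*1) / (2*q*1 + 2 - q))
     + (6-q)/(2*q) * ln ((q+2)/4)
     + (q-2)/q * (ln (sqrt pi) + ln_Gamma (2/(q-2)) - ln_Gamma (2/(q-2) + 1/2))"
    using lnK[OF qgt _ qA] by auto
  have lnN: "ln (N_ratio \<theta> p) = (1/\<theta>) * ln (K_CKN \<theta> p 1) - ln (K_CKN 1 q 1)"
    unfolding N_ratio_def q_def[symmetric] using K1(1) K2(1) by (simp add: ln_div ln_powr)
  have p2: "p - 2 > 0" using p by simp
  have l4: "ln (4::real) = 2 * ln 2" using ln_realpow[of 2 2] by simp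
  have L1: "ln ((2*p*\<theta> + 2 - p) / (p - 2)^2) = ln A - 2*ln(p-2)"
    using Ap p2 by (simp add: ln_div ln_realpow A_def)
  have L2: "ln ((2*p*\<theta>) / (2*p*\<theta> + 2 - p)) = ln 2 + ln p + ln \<theta> - ln A"
    using Ap p thp by (simp add: ln_div ln_mult A_def)
  have L3: "ln ((p+2)/4) = ln (p+2) - 2 * ln 2"
    using p by (simp add: ln_div l4)
  have L4: "ln ((2*q*1 + 2 - q) / (q - 2)^2) = ln A + ln D - ln 2 - 2*ln(p-2)"
  proof -
    have e1: "2*q*1+2-q = 2*A/D" using qp2 by simp
    have "(2*q*1 + 2 - q) / (q - 2)^2 = (2*A/D) / (2*(p-2)/D)^2" unfolding e1 q2 ..
    also have "\<dots> = (A * D) / (2 * (p-2)^2)"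
    proof -
      have "\<And>r. r > 0 \<Longrightarrow> (2*A/D) / (2*r/D)^2 = (A * D) / (2 * r^2)"
        using Dp by (simp add: field_simps power2_eq_square)
      thus ?thesis using p2 by blast
    qed
    finally have "(2*q*1 + 2 - q) / (q - 2)^2 = (A * D) / (2 * (p-2)^2)" .
    thus ?thesis using Ap Dp p2 by (simp add: ln_div ln_mult ln_realpow)
  qed
  have L5: "ln ((2*q*1) / (2*q*1 + 2 - q)) = ln 2 + ln p + ln \<theta> - ln A"
  proof -
    have e1: "2*q*1+2-q = 2*A/D" using qp2 by simp
    have e2: "2*q*1 = 2*(2*p*\<theta>)/D" using qdef by simp
    have "\<And>X. (2*X/D)/(2*A/D) = X/A" using Ap Dp by (simp add: field_simps)
    hence "(2*q*1) / (2*q*1 + 2 - q) = (2*p*\<theta>) / A" unfolding e1 unfolding e2 by blast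
    then have "(2*q*1) / (2*q*1 + 2 - q) = (2*p*\<theta>) / (2*p*\<theta> + 2 - p)" unfolding A_def .
    thus ?thesis using L2 by simp
  qed
  have L6: "ln ((q+2)/4) = ln A - ln D - ln 2"
  proof -
    have "(q+2)/4 = A / (D * 2)" using qp2 Dp by (simp add: field_simps)
    thus ?thesis using Ap Dp by (simp add: ln_div ln_mult)
  qed
  define c where "c = 2/(p-2)"
  define a where "a = D/(p-2)"
  have ac: "2/(q-2) = a" unfolding a_def q2 using Dp p2 by (simp add: field_simps)
  have a0: "0 < a" unfolding a_def using Dp p2 by simp
  have alc: "a < c" unfolding a_def c_def using D2 p2 by (simp add: divide_strict_right_mono)
  have M: "mfun a < mfun c" using mfun_mono[OF a0 alc] .
  have Lc: "ln c = ln 2 - ln (p-2)" unfolding c_def using p2 by (simp add: ln_div)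
  have Lc2: "ln (c + 1/2) = ln (p+2) - ln 2 - ln (p-2)"
  proof -
    have "c + 1/2 = (p+2)/(2*(p-2))" unfolding c_def using p2 by (simp add: field_simps)
    moreover have "ln ((p+2)/(2*(p-2))) = ln (p+2) - ln (2*(p-2))" using p2 p by (intro ln_divide_pos) auto
    moreover have "ln (2*(p-2)) = ln 2 + ln (p-2)" using p2 by (intro ln_mult_pos) auto
    ultimately show ?thesis by simp
  qed
  have La: "ln a = ln D - ln (p-2)" unfolding a_def using p2 Dp by (simp add: ln_div)
  have La2: "ln (a + 1/2) = ln A - ln 2 - ln (p-2)"
  proof -
    have "a + 1/2 = A/(2*(p-2))" unfolding a_def A_def D_def using p2 by (simp add: field_simps)
    moreover have "ln (A/(2*(p-2))) = ln A - ln (2*(p-2))" using p2 Ap by (intro ln_divide_pos) auto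
    moreover have "ln (2*(p-2)) = ln 2 + ln (p-2)" using p2 by (intro ln_mult_pos) auto
    ultimately show ?thesis by simp
  qed
  have qX: "q = 2*(p*\<theta>)/D" unfolding qdef by simp
  have X0: "p*\<theta> > 0" using thp p by simp
  have XD: "p*\<theta> - D = p - 2" "3*D - p*\<theta> = 6 - 3*p + 2*(p*\<theta>)" unfolding D_def by simp_all
  have E1: "(q-2)/(2*q) = (p-2)/(2*(p*\<theta>))" unfolding qX frac_ids[OF Dp X0] XD ..
  have E2: "(6-q)/(2*q) = (6 - 3*p + 2*(p*\<theta>))/(2*(p*\<theta>))" unfolding qX frac_ids[OF Dp X0] XD ..
  have E3: "(q-2)/q = (p-2)/(p*\<theta>)" unfolding qX frac_ids[OF Dp X0] XD ..
  have C1: "2*c - 1 = (6-p)/(p-2)" unfolding c_def using p2 by (simp add: field_simps)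
  have A1: "2*a - 1 = (6 - 3*p + 2*(p*\<theta>))/(p-2)" unfolding a_def D_def using p2 by (simp add: field_simps)
  define K where "K = (p-2)/(2*(p*\<theta>))"
  define c1 where "c1 = (6-p)/(p-2)"
  define a1 where "a1 = (6 - 3*p + 2*(p*\<theta>))/(p-2)"
  have E1': "(q-2)/(2*q) = K" unfolding E1 K_def ..
  have E2': "(6-q)/(2*q) = K*a1" unfolding E2 K_def a1_def using p2 by simp
  have E3': "(q-2)/q = 2*K" unfolding E3 K_def using thp p2 by (simp add: field_simps)
  have H1: "(1/\<theta>)*((p-2)/(2*p)) = K" unfolding K_def using thp p2 by (simp add: field_simps)
  have H2: "(1/\<theta>)*((6-p)/(2*p)) = K*c1" unfolding K_def c1_def using thp p2 by (simp add: field_simps)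
  have H3: "(1/\<theta>)*((p-2)/p) = 2*K" unfolding K_def using thp p2 by (simp add: field_simps)
  have H4: "(1/\<theta>)*\<theta> = 1" using thp by simp
  have cG: "2/(p-2) = c" unfolding c_def ..
  have "ln (N_ratio \<theta> p) = (1/\<theta>)*( (p-2)/(2*p)*(ln A - 2*ln(p-2)) + \<theta>*(ln 2 + ln p + ln \<theta> - ln A)
      + (6-p)/(2*p)*(ln(p+2) - 2*ln 2) + (p-2)/p*(ln(sqrt pi) + ln_Gamma c - ln_Gamma (c+1/2)) )
    - ( K*(ln A + ln D - ln 2 - 2*ln(p-2)) + (ln 2 + ln p + ln \<theta> - ln A) + K*a1*(ln A - ln D - ln 2)
      + 2*K*(ln(sqrt pi) + ln_Gamma a - ln_Gamma (a+1/2)) )"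
    unfolding lnN K1(2) K2(2) L1 L2 L3 L4 L5 L6 E1' E2' E3' ac cG by simp
  also have "\<dots> = K*((ln 2 - ln(p-2)) + c1*(ln(p+2) - 2*ln 2) + 2*ln_Gamma c - 2*ln_Gamma (c+1/2)
      - (ln D - ln(p-2)) - a1*(ln A - ln 2 - ln D) - 2*ln_Gamma a + 2*ln_Gamma (a+1/2))"
    by (rule alg0[OF H1 H2 H3 H4])
  also have "\<dots> = K * (mfun c - mfun a)"
    unfolding mfun_def Lc Lc2 La La2 C1 A1 c1_def[symmetric] a1_def[symmetric]
    by (simp add: algebra_simps)
  finally have "ln (N_ratio \<theta> p) = K * (mfun c - mfun a)" .
  moreover have "K * (mfun c - mfun a) > 0"
    using M p2 thp p unfolding K_def by simp
  ultimately have "ln (N_ratio \<theta> p) > 0" by simp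
  moreover have "N_ratio \<theta> p > 0" unfolding N_ratio_def using K1(1) K2(1) q_def by simp
  ultimately show ?thesis using ln_gt_zero_iff by blast
qed

lemma powr_dec: "y > 0 \<Longrightarrow> y powr (b - 1) * y = y powr (b::real)"
  by (simp add: powr_diff)

lemma G_ineq:
  fixes a al b x0 x :: real
  assumes x0: "0 < x0" "x0 < x" and a: "a > 0" and al: "al > 0" and b: "0 < b" "b < 1"
  shows "b*(x - x0)*(a*x0 - al)*x0 powr (b-1) < (x powr b - x0 powr b)*(a*x - al)"
proof -
  define Gp where "Gp y = b*y powr (b-1)*(a*y - al) + (y powr b - x0 powr b)*a - b*(a*x0 - al)*x0 powr (b-1)" for y
  define G2 where "G2 y = b*((b-1)*y powr (b-1-1))*(a*y - al) + b*y powr (b-1)*a + b*y powr (b-1)*a" for y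
  have dGp: "(Gp has_real_derivative G2 y) (at y)" if "y > 0" for y
  proof -
    have h1: "((\<lambda>y. y powr (b-1)) has_real_derivative (b-1)*y powr (b-1-1)) (at y)"
      using that by (rule has_real_derivative_powr)
    have h2: "((\<lambda>y. y powr b) has_real_derivative b*y powr (b-1)) (at y)"
      using that by (rule has_real_derivative_powr)
    have h3: "((\<lambda>y. a*y - al) has_real_derivative a) (at y)"
      by (auto intro!: derivative_eq_intros)
    have "((\<lambda>y. b*y powr (b-1)*(a*y - al) + (y powr b - x0 powr b)*a - b*(a*x0 - al)*x0 powr (b-1))
       has_real_derivative (b*((b-1)*y powr (b-1-1))*(a*y - al) + a*(b*y powr (b-1))) + (b*y powr (b-1) - 0)*a - 0) (at y)"
      by (intro DERIV_diff DERIV_add DERIV_cmult_right DERIV_mult DERIV_cmult h1 h2 h3 DERIV_const)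
    thus ?thesis unfolding Gp_def[abs_def] G2_def by (simp add: algebra_simps)
  qed
  have G2pos: "G2 y > 0" if "y > 0" for y
  proof -
    have e: "y powr (b-1-1) * y = y powr (b-1)" using powr_dec[OF that, of "b-1"] .
    have "G2 y = b*y powr (b-1-1) * ((b-1)*(a*y - al) + 2*a*y)"
      unfolding G2_def e[symmetric] by (simp add: algebra_simps)
    also have "\<dots> = b*y powr (b-1-1) * ((1+b)*a*y + (1-b)*al)" by (simp add: algebra_simps)
    also have "\<dots> > 0" using that a al b by (intro mult_pos_pos add_pos_pos) auto
    finally show ?thesis .
  qed
  have Gp0: "Gp x0 = 0" unfolding Gp_def by simp
  have Gppos: "Gp y > 0" if "x0 < y" for y
  proof -
    have "Gp x0 < Gp y"
    proof (rule DERIV_pos_imp_increasing[OF that])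
      fix t assume "x0 \<le> t" "t \<le> y"
      hence "t > 0" using x0 by simp
      thus "\<exists>z. (Gp has_real_derivative z) (at t) \<and> z > 0" using dGp G2pos by blast
    qed
    thus ?thesis using Gp0 by simp
  qed
  define G where "G y = (y powr b - x0 powr b)*(a*y - al) - b*(y - x0)*(a*x0 - al)*x0 powr (b-1)" for y
  have dG: "(G has_real_derivative Gp y) (at y)" if "y > 0" for y
  proof -
    have h2: "((\<lambda>y. y powr b) has_real_derivative b*y powr (b-1)) (at y)"
      using that by (rule has_real_derivative_powr)
    have h3: "((\<lambda>y. a*y - al) has_real_derivative a) (at y)"
      by (auto intro!: derivative_eq_intros)
    have h4: "((\<lambda>y. b*(y - x0)*(a*x0 - al)*x0 powr (b-1)) has_real_derivative b*(a*x0 - al)*x0 powr (b-1)) (at y)"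
      by (auto intro!: derivative_eq_intros)
    have "((\<lambda>y. (y powr b - x0 powr b)*(a*y - al) - b*(y - x0)*(a*x0 - al)*x0 powr (b-1))
       has_real_derivative ((b*y powr (b-1) - 0)*(a*y - al) + a*(y powr b - x0 powr b)) - b*(a*x0 - al)*x0 powr (b-1)) (at y)"
      by (intro DERIV_diff DERIV_mult h2 h3 h4 DERIV_const)
    thus ?thesis unfolding G_def[abs_def] Gp_def by (simp add: algebra_simps)
  qed
  have "G x0 < G x"
  proof (rule DERIV_pos_imp_increasing_open[OF x0(2)])
    fix t assume "x0 < t" "t < x"
    hence "t > 0" "x0 < t" using x0 by auto
    thus "\<exists>z. (G has_real_derivative z) (at t) \<and> z > 0" using dG[of t] Gppos[of t] by blast
  next
    show "continuous_on {x0..x} G"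
    proof (rule DERIV_atLeastAtMost_imp_continuous_on)
      fix t assume "x0 \<le> t" "t \<le> x"
      hence "t > 0" using x0 by auto
      thus "\<exists>y. (G has_real_derivative y) (at t)" using dG by blast
    qed
  qed
  moreover have "G x0 = 0" unfolding G_def by simp
  ultimately show ?thesis unfolding G_def by simp
qed

lemma F_convex:
  fixes th a al b N :: real
  assumes th: "th > 0" and a: "a > 0" and al: "al > 0" and b: "0 < b" "b < 1"
  shows "convex_on {0<..} (\<lambda>x. th*a*(x powr b - N)*x - al*(th*(x powr b - N) + (1-th)*(x-1)*N))"
proof (rule f''_ge0_imp_convex)
  show "convex {0::real<..}" by simp
  define g1 where "g1 x = th*a*b*x powr (b-1)*x + th*a*(x powr b - N) - al*th*b*x powr (b-1) - al*(1-th)*N" for x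
  define g2 where "g2 x = th*a*b*((b-1)*x powr (b-1-1)*x + 1*x powr (b-1)) + th*a*(b*x powr (b-1)) - al*th*b*((b-1)*x powr (b-1-1))" for x
  show "((\<lambda>x. th*a*(x powr b - N)*x - al*(th*(x powr b - N) + (1-th)*(x-1)*N)) has_real_derivative g1 x) (at x)"
    if "x \<in> {0<..}" for x
  proof -
    have hp: "((\<lambda>y. y powr b) has_real_derivative b*x powr (b-1)) (at x)"
      using that by (intro has_real_derivative_powr) auto
    have "((\<lambda>x. th*a*(x powr b - N)*x - al*(th*(x powr b - N) + (1-th)*(x-1)*N)) has_real_derivative
        (th*a*(b*x powr (b-1) - 0)) * x + 1 * (th*a*(x powr b - N)) - al*(th*(b*x powr (b-1) - 0) + (1-th)*(1 - 0)*N)) (at x)"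
      by (intro DERIV_diff DERIV_mult DERIV_cmult DERIV_add DERIV_cmult_right hp DERIV_const DERIV_ident)
    moreover have "(th*a*(b*x powr (b-1) - 0)) * x + 1 * (th*a*(x powr b - N)) - al*(th*(b*x powr (b-1) - 0) + (1-th)*(1 - 0)*N) = g1 x"
      unfolding g1_def by (simp add: algebra_simps)
    ultimately show ?thesis by simp
  qed
  show "(g1 has_real_derivative g2 x) (at x)" if "x \<in> {0<..}" for x
  proof -
    have hp: "((\<lambda>y. y powr b) has_real_derivative b*x powr (b-1)) (at x)"
      using that by (intro has_real_derivative_powr) auto
    have hp1: "((\<lambda>y. y powr (b-1)) has_real_derivative (b-1)*x powr (b-1-1)) (at x)"
      using that by (intro has_real_derivative_powr) auto
    have "((\<lambda>x. th*a*b*x powr (b-1)*x + th*a*(x powr b - N) - al*th*b*x powr (b-1) - al*(1-th)*N) has_real_derivative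
         (th*a*b*((b-1)*x powr (b-1-1)) * x + 1 * (th*a*b*x powr (b-1)) + th*a*(b*x powr (b-1) - 0) - al*th*b*((b-1)*x powr (b-1-1)) - 0)) (at x)"
      by (intro DERIV_diff DERIV_mult DERIV_cmult DERIV_add hp hp1 DERIV_const DERIV_ident)
    moreover have "th*a*b*((b-1)*x powr (b-1-1)) * x + 1 * (th*a*b*x powr (b-1)) + th*a*(b*x powr (b-1) - 0) - al*th*b*((b-1)*x powr (b-1-1)) - 0 = g2 x"
      unfolding g2_def by (simp add: algebra_simps)
    ultimately show ?thesis unfolding g1_def[abs_def] by simp
  qed
  show "0 \<le> g2 x" if "x \<in> {0<..}" for x
  proof -
    have xp: "x > 0" using that by simp
    have e: "x powr (b-1-1) * x = x powr (b-1)" using powr_dec[OF xp, of "b-1"] .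
    have "g2 x = th*b*x powr (b-1-1) * ((1+b)*a*x + (1-b)*al)"
      unfolding g2_def e[symmetric] by (simp add: algebra_simps)
    also have "\<dots> \<ge> 0" using xp th a al b by (intro mult_nonneg_nonneg add_nonneg_nonneg) auto
    finally show ?thesis .
  qed
qed

theorem proposition2:
  fixes d :: nat and p \<theta> :: real
  assumes "d \<ge> 2"
    and "(d = 2 \<and> 2 < p \<and> p < 6) \<or> (d \<ge> 3 \<and> 2 < p \<and> p < crit_exp d)"
    and "vartheta p 3 < \<theta>" and "\<theta> < 1"
  shows "let \<alpha> = 2*p*\<theta> - 3*(p - 2); \<beta> = 1 - (p - 2) / (2*p*\<theta>); N = N_ratio \<theta> p in
    Lambda2 \<theta> p d >
      (real d - 1) * \<alpha> / (4 * (p - 2)) *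
      ((\<beta>*\<theta>*(6 - p) - \<alpha>*(1 - \<theta> + \<beta>*\<theta>*N powr (-1/\<beta>)))
       / (\<beta>*\<theta>*(6 - p)*N powr (1/\<beta>) - \<alpha>*(\<beta>*\<theta> + 1 - \<theta>)))"
proof -
  have p2: "2 < p" using assms(2) by auto
  have p6: "p < 6"
  proof (cases "d = 2")
    case True thus ?thesis using assms(2) by auto
  next
    case False
    hence d3: "real d \<ge> 3" and pc: "p < crit_exp d" using assms(1,2) by auto
    have "crit_exp d \<le> 6" unfolding crit_exp_def using d3 by (simp add: field_simps)
    thus ?thesis using pc by simp
  qed
  have th1: "\<theta> < 1" using assms(4) .
  have th0': "3*(p-2) < 2*p*\<theta>" using assms(3) p2 unfolding vartheta_def by (simp add: field_simps)
  have "0 < 2*p*\<theta>" using th0' p2 by (simp add: algebra_simps)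
  hence thp: "\<theta> > 0" using p2 by (simp add: zero_less_mult_iff)
  define \<alpha> where "\<alpha> = 2*p*\<theta> - 3*(p - 2)"
  define \<beta> where "\<beta> = 1 - (p - 2) / (2*p*\<theta>)"
  define N where "N = N_ratio \<theta> p"
  define a where "a = 6 - p"
  have al: "\<alpha> > 0" unfolding \<alpha>_def using th0' by simp
  have ap: "a > 0" unfolding a_def using p6 by simp
  have bb: "beta_exp \<theta> p = \<beta>" unfolding beta_exp_def \<beta>_def ..
  have b0: "\<beta> > 0"
  proof -
    have "(p-2)/(2*p*\<theta>) < 1" using th0' p2 \<open>0 < 2*p*\<theta>\<close> by (simp add: divide_less_eq)
    thus ?thesis unfolding \<beta>_def by simp
  qed
  have b1: "\<beta> < 1" unfolding \<beta>_def using p2 \<open>0 < 2*p*\<theta>\<close> by simp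
  have Ngt: "N > 1" unfolding N_def using N_gt_1[OF p2 assms(3) th1] .
  define x0 where "x0 = N powr (1/\<beta>)"
  have x0gt: "x0 > 1"
  proof -
    have "1 powr (1/\<beta>) < N powr (1/\<beta>)" using Ngt b0 by (intro powr_less_mono2) auto
    thus ?thesis unfolding x0_def by simp
  qed
  have x0b: "x0 powr \<beta> = N" unfolding x0_def using Ngt b0 by (simp add: powr_powr)
  define F where "F x = x_eq \<theta> p x" for x
  have Feq: "F x = \<theta>*a*(x powr \<beta> - N)*x - \<alpha>*(\<theta>*(x powr \<beta> - N) + (1-\<theta>)*(x-1)*N)" for x
    unfolding F_def x_eq_def Let_def bb N_def[symmetric] a_def \<alpha>_def by (simp add: algebra_simps)
  have Fx0: "F x0 < 0"
  proof -
    have "F x0 = - (\<alpha>*(1-\<theta>)*(x0-1)*N)" unfolding Feq x0b by (simp add: algebra_simps)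
    moreover have "\<alpha>*(1-\<theta>)*(x0-1)*N > 0" using al th1 x0gt Ngt by simp
    ultimately show ?thesis by simp
  qed
  define M where "M = 2*\<alpha>*(1-\<theta>)*N/(\<theta>*a) + 1"
  define X where "X = max (x0+1) (max (2*\<alpha>/a) ((N+M) powr (1/\<beta>)))"
  have "2*\<alpha>*(1-\<theta>)*N/(\<theta>*a) > 0" using al th1 thp ap Ngt by simp
  hence Mp: "M > 0" unfolding M_def by simp
  have Xx0: "X > x0" unfolding X_def by simp
  have X0: "X > 0" using Xx0 x0gt by simp
  have FX: "F X > 0"
  proof -
    have "(N+M) powr (1/\<beta>) \<le> X" unfolding X_def by simp
    hence "((N+M) powr (1/\<beta>)) powr \<beta> \<le> X powr \<beta>" using b0 by (intro powr_mono2) auto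
    hence XM: "N + M \<le> X powr \<beta>" using Ngt Mp b0 by (simp add: powr_powr)
    have "2*\<alpha>/a \<le> X" unfolding X_def by simp
    hence Xa: "a*X - \<alpha> \<ge> a*X/2" using ap by (simp add: field_simps)
    have "F X = \<theta>*(X powr \<beta> - N)*(a*X - \<alpha>) - \<alpha>*(1-\<theta>)*(X-1)*N" unfolding Feq by (simp add: algebra_simps)
    also have "\<dots> \<ge> \<theta>*M*(a*X/2) - \<alpha>*(1-\<theta>)*X*N"
    proof -
      have "\<theta>*M*(a*X/2) \<le> \<theta>*(X powr \<beta> - N)*(a*X - \<alpha>)"
        using XM Xa thp Mp ap X0 by (intro mult_mono mult_left_mono) auto
      moreover have "\<alpha>*(1-\<theta>)*(X-1)*N \<le> \<alpha>*(1-\<theta>)*X*N"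
        using al th1 Ngt by (intro mult_right_mono mult_left_mono) auto
      ultimately show ?thesis by linarith
    qed
    also have "\<theta>*M*(a*X/2) - \<alpha>*(1-\<theta>)*X*N = \<theta>*a*X/2"
      unfolding M_def using thp ap by (simp add: field_simps)
    finally show ?thesis using thp ap X0 by (smt (verit) divide_pos_pos mult_pos_pos)
  qed
  have contF: "continuous_on {x0..X} F"
  proof -
    have "continuous_on {x0..X} (\<lambda>x. \<theta>*a*(x powr \<beta> - N)*x - \<alpha>*(\<theta>*(x powr \<beta> - N) + (1-\<theta>)*(x-1)*N))"
      using x0gt by (intro continuous_intros) auto
    thus ?thesis unfolding Feq[abs_def] .
  qed
  obtain r where r: "x0 \<le> r" "r \<le> X" "F r = 0"
    using IVT'[of F x0 0 X] Fx0 FX Xx0 contF by auto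
  have rx0: "r > x0" using r Fx0 by (cases "r = x0") auto
  have conv: "convex_on {0<..} F"
    unfolding Feq[abs_def] using F_convex[OF thp ap al b0 b1] .
  have neg: "F u < 0" if "x0 < u" "u < w" "F w = 0" for u w
  proof -
    define t where "t = (u - x0)/(w - x0)"
    have t: "0 \<le> t" "t \<le> 1" "t < 1" unfolding t_def using that by (auto simp: field_simps)
    have tv: "t*(w-x0) = u - x0" unfolding t_def using that by simp
    have "(1-t)*x0 + t*w = x0 + t*(w-x0)" by (simp add: algebra_simps)
    hence uu: "u = (1-t) *\<^sub>R x0 + t *\<^sub>R w" using tv by simp
    have "F u \<le> (1-t) * F x0 + t * F w"
      unfolding uu using convex_onD[OF conv, of t x0 w] t that x0gt by auto
    also have "\<dots> < 0" using that t Fx0 by (simp add: mult_pos_neg)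
    finally show ?thesis .
  qed
  have uniq: "y = r" if "x0 < y" "F y = 0" for y
  proof (rule ccontr)
    assume "y \<noteq> r"
    hence "y < r \<or> r < y" by auto
    thus False using neg[of y r] neg[of r y] that r rx0 by auto
  qed
  have xs: "x_star \<theta> p = r"
    unfolding x_star_def bb N_def[symmetric] x0_def[symmetric] F_def[symmetric, abs_def]
  proof (rule the_equality)
    show "x0 < r \<and> F r = 0" using rx0 r by simp
    show "\<And>y. x0 < y \<and> F y = 0 \<Longrightarrow> y = r" using uniq by blast
  qed
  have Gi: "\<beta>*(r - x0)*(a*x0 - \<alpha>)*x0 powr (\<beta>-1) < (r powr \<beta> - x0 powr \<beta>)*(a*r - \<alpha>)"
    using G_ineq[of x0 r a \<alpha> \<beta>] x0gt rx0 ap al b0 b1 by simp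
  have x0p: "x0 powr (\<beta>-1) = N/x0" using x0gt x0b by (simp add: powr_diff)
  have root: "\<theta>*(r powr \<beta> - N)*(a*r - \<alpha>) = \<alpha>*(1-\<theta>)*(r-1)*N"
    using r(3) unfolding Feq by (simp add: algebra_simps)
  have "\<theta>*(\<beta>*(r - x0)*(a*x0 - \<alpha>)*(N/x0)) < \<alpha>*(1-\<theta>)*(r-1)*N"
  proof -
    have "\<theta>*(\<beta>*(r - x0)*(a*x0 - \<alpha>)*(N/x0)) < \<theta>*((r powr \<beta> - N)*(a*r - \<alpha>))"
      using mult_strict_left_mono[OF Gi thp] unfolding x0p x0b .
    also have "\<dots> = \<alpha>*(1-\<theta>)*(r-1)*N" using root by (simp add: mult.assoc)
    finally show ?thesis .
  qed
  moreover have "\<theta>*(\<beta>*(r - x0)*(a*x0 - \<alpha>)*(N/x0)) = (\<theta>*\<beta>*(r - x0)*(a*x0 - \<alpha>)/x0) * N"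
    by (simp add: ac_simps)
  ultimately have lt: "(\<theta>*\<beta>*(r - x0)*(a*x0 - \<alpha>)/x0) * N < (\<alpha>*(1-\<theta>)*(r-1)) * N" by simp
  define LL where "LL = \<theta>*\<beta>*(r - x0)*(a*x0 - \<alpha>)/x0"
  define RR where "RR = \<alpha>*(1-\<theta>)*(r-1)"
  have "LL * N < RR * N" using lt unfolding LL_def RR_def .
  hence "LL < RR" using Ngt by (simp only: mult_less_cancel_right)
  hence star: "\<theta>*\<beta>*(r - x0)*(a*x0 - \<alpha>)/x0 < \<alpha>*(1-\<theta>)*(r-1)" unfolding LL_def RR_def .
  define Num where "Num = \<beta>*\<theta>*a*x0 - \<alpha>*(\<beta>*\<theta> + 1 - \<theta>)"
  define Den where "Den = \<beta>*\<theta>*a - \<alpha>*(1 - \<theta> + \<beta>*\<theta>*(1/x0))"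
  have bt: "\<beta>*\<theta> = \<theta> - (p-2)/(2*p)" unfolding \<beta>_def using thp p2 by (simp add: field_simps)
  have Num1: "\<beta>*\<theta>*a - \<alpha>*(\<beta>*\<theta> + 1 - \<theta>) = 2*(p-2)*(1-\<theta>)"
    unfolding bt a_def \<alpha>_def using p2 by (simp add: field_simps) (simp add: algebra_simps)?
  have btp: "\<beta>*\<theta> > 0" using b0 thp by simp
  have NumP: "Num > 0"
  proof -
    have "\<beta>*\<theta>*a > 0" using btp ap by simp
    hence "\<beta>*\<theta>*a*1 < \<beta>*\<theta>*a*x0" using x0gt by (intro mult_strict_left_mono) auto
    moreover have "2*(p-2)*(1-\<theta>) > 0" using p2 th1 by simp
    ultimately show ?thesis unfolding Num_def using Num1 by simp
  qed
  have rD: "r*Den - Num = \<theta>*\<beta>*(r - x0)*(a*x0 - \<alpha>)/x0 - \<alpha>*(1-\<theta>)*(r-1)"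
    unfolding Den_def Num_def using x0gt by (simp add: field_simps)
  have rDN: "r*Den < Num" using rD star by simp
  have r0: "r > 0" using rx0 x0gt by simp
  have DN: "Den/Num < 1/r" using rDN NumP r0 by (simp add: field_simps)
  have C: "(real d - 1) * \<alpha> / (4 * (p - 2)) > 0" using assms(1) al p2 by simp
  have e1: "N powr (-1/\<beta>) = 1/x0" unfolding x0_def using Ngt by (simp add: powr_minus_divide)
  have "(real d - 1) * \<alpha> / (4 * (p - 2)) * (Den/Num) < (real d - 1) * \<alpha> / (4 * (p - 2)) * (1/r)"
    by (rule mult_strict_left_mono[OF DN C])
  moreover have "Lambda2 \<theta> p d = (real d - 1) * \<alpha> / (4 * (p - 2)) * (1/r)"
    unfolding Lambda2_def xs \<alpha>_def by simp
  ultimately show ?thesis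
    unfolding Let_def \<alpha>_def[symmetric] \<beta>_def[symmetric] N_def[symmetric] e1 x0_def[symmetric]
      a_def[symmetric] Num_def[symmetric] Den_def[symmetric] by simp
qed

end
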